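(* Fix $M>0$. For every $\delta>0$ there exist $\varepsilon_0>0$ and $l_0$ large such that the following holds for $0<\varepsilon\le\varepsilon_0$. Suppose a spherically symmetric solution of the Einstein–scalar field system exists in the open trapezoid region $T_0\subset\mathcal T$ and its initial data on the spacelike curve $\{r=2^{-l_0}\}$ satisfy $$\Big|\partial_vr+\frac Mr\Big|\le\varepsilon\frac Mr,\quad\Big|\partial_ur+\frac Mr\Big|\le\varepsilon\frac Mr,\quad\Big|\Omega^2-\frac{2M}r\Big|\le\varepsilon\frac Mr,\quad|\partial_u\phi|\le\frac{\varepsilon}{r^2},\quad|\partial_v\phi|\le\frac{\varepsilon}{r^2}.$$ Then throughout $T_0$: $$|r\partial_vr+M|\le\delta M,\qquad|r\partial_ur+M|\le\delta M,\qquad\Omega^2\le\frac{2.5M}{r},\qquad r^2|\partial_u\phi|+r^2|\partial_v\phi|\le C\varepsilon,$$ where $C$ depends only on $M$.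
   Context: The Einstein–scalar field system under spherical symmetry in double null coordinates, $g=-\Omega^2(u,v)\,du\,dv+r^2(u,v)(d\theta^2+\sin^2\theta\,d\varphi^2)$, with scalar field $\phi$, reads $r\partial_u\partial_v r=-\partial_ur\,\partial_vr-\frac14\Omega^2$, $r^2\partial_u\partial_v\log\Omega=\partial_ur\,\partial_vr+\frac14\Omega^2-r^2\partial_u\phi\,\partial_v\phi$, $r\partial_u\partial_v\phi=-\partial_ur\,\partial_v\phi-\partial_vr\,\partial_u\phi$, $\partial_u(\Omega^{-2}\partial_ur)=-r\Omega^{-2}(\partial_u\phi)^2$, $\partial_v(\Omega^{-2}\partial_vr)=-r\Omega^{-2}(\partial_v\phi)^2$. The trapped region is $\mathcal T=\{\partial_ur<0,\partial_vr<0,r>0\}$. The trapezoid region $T_0$ is the open region in $\mathcal T$ bounded to the past by the spacelike curve $\{r=2^{-l_0}\}$, to the future by the singular curve $\{r=0\}$, and on the sides by null segments $\{u=U\}$ and $\{v=V\}$ (so $T_0$ is the domain of dependence of its initial curve). These data are a perturbation of the Schwarzschild interior of mass parameter $M$ near $r=0$. *)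

theory Defs
  imports "HOL-Analysis.Analysis"
begin

definition pu :: "(real \<Rightarrow> real \<Rightarrow> real) \<Rightarrow> real \<Rightarrow> real \<Rightarrow> real" where
  "pu f = (\<lambda>u v. deriv (\<lambda>s. f s v) u)"

definition pv :: "(real \<Rightarrow> real \<Rightarrow> real) \<Rightarrow> real \<Rightarrow> real \<Rightarrow> real" where
  "pv f = (\<lambda>u v. deriv (\<lambda>t. f u t) v)"

definition pdiff_on :: "(real \<times> real) set \<Rightarrow> (real \<Rightarrow> real \<Rightarrow> real) \<Rightarrow> bool" where
  "pdiff_on D f \<longleftrightarrow> (\<forall>(u,v)\<in>D. (\<lambda>s. f s v) differentiable (at u) \<and> (\<lambda>t. f u t) differentiable (at v))"

definition C2_on :: "(real \<times> real) set \<Rightarrow> (real \<Rightarrow> real \<Rightarrow> real) \<Rightarrow> bool" where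
  "C2_on D f \<longleftrightarrow>
     pdiff_on D f \<and> pdiff_on D (pu f) \<and> pdiff_on D (pv f) \<and>
     continuous_on D (case_prod f) \<and>
     continuous_on D (case_prod (pu f)) \<and> continuous_on D (case_prod (pv f)) \<and>
     continuous_on D (case_prod (pu (pu f))) \<and> continuous_on D (case_prod (pu (pv f))) \<and>
     continuous_on D (case_prod (pv (pu f))) \<and> continuous_on D (case_prod (pv (pv f)))"

text \<open>Spherically symmetric Einstein--scalar field system in double null coordinates,
  g = - Om^2 du dv + r^2 (round metric), classical solution on the open set D.\<close>
definition ESF_solution ::
  "(real \<times> real) set \<Rightarrow> (real \<Rightarrow> real \<Rightarrow> real) \<Rightarrow> (real \<Rightarrow> real \<Rightarrow> real) \<Rightarrow> (real \<Rightarrow> real \<Rightarrow> real) \<Rightarrow> bool"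
  where
  "ESF_solution D r Om phi \<longleftrightarrow>
     open D \<and> C2_on D r \<and> C2_on D Om \<and> C2_on D phi \<and>
     (\<forall>(u,v)\<in>D. r u v > 0 \<and> Om u v > 0 \<and>
        r u v * pu (pv r) u v = - pu r u v * pv r u v - (1/4) * (Om u v)\<^sup>2 \<and>
        (r u v)\<^sup>2 * pu (pv (\<lambda>a b. ln (Om a b))) u v
           = pu r u v * pv r u v + (1/4) * (Om u v)\<^sup>2 - (r u v)\<^sup>2 * pu phi u v * pv phi u v \<and>
        r u v * pu (pv phi) u v = - pu r u v * pv phi u v - pv r u v * pu phi u v \<and>
        pu (\<lambda>a b. pu r a b / (Om a b)\<^sup>2) u v = - r u v * (pu phi u v)\<^sup>2 / (Om u v)\<^sup>2 \<and>
        pv (\<lambda>a b. pv r a b / (Om a b)\<^sup>2) u v = - r u v * (pv phi u v)\<^sup>2 / (Om u v)\<^sup>2)"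

definition trapezoid :: "(real \<times> real) set \<Rightarrow> (real \<Rightarrow> real \<Rightarrow> real) \<Rightarrow> real \<Rightarrow> real \<Rightarrow> nat \<Rightarrow> (real \<times> real) set" where
  "trapezoid D r U V l0 = {(u,v)\<in>D. U < u \<and> V < v \<and> r u v < 2 powr (- real l0)}"

definition init_curve :: "(real \<times> real) set \<Rightarrow> (real \<Rightarrow> real \<Rightarrow> real) \<Rightarrow> real \<Rightarrow> real \<Rightarrow> nat \<Rightarrow> (real \<times> real) set" where
  "init_curve D r U V l0 = {(u,v)\<in>D. U \<le> u \<and> V \<le> v \<and> r u v = 2 powr (- real l0)}"

text \<open>T_0 lies in the trapped region and is the domain of dependence of its initial curve:
  both past-directed null segments from any point of T_0 stay in T_0 until they hit the curve.\<close>
definition trapezoid_setup ::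
  "(real \<times> real) set \<Rightarrow> (real \<Rightarrow> real \<Rightarrow> real) \<Rightarrow> real \<Rightarrow> real \<Rightarrow> nat \<Rightarrow> bool" where
  "trapezoid_setup D r U V l0 \<longleftrightarrow>
     (\<forall>(u,v)\<in>trapezoid D r U V l0. pu r u v < 0 \<and> pv r u v < 0 \<and> r u v > 0) \<and>
     (\<forall>(u,v)\<in>trapezoid D r U V l0.
        (\<exists>u0. U \<le> u0 \<and> u0 < u \<and> (u0,v) \<in> init_curve D r U V l0 \<and>
              (\<forall>s. u0 < s \<and> s \<le> u \<longrightarrow> (s,v) \<in> trapezoid D r U V l0)) \<and>
        (\<exists>v0. V \<le> v0 \<and> v0 < v \<and> (u,v0) \<in> init_curve D r U V l0 \<and>
              (\<forall>t. v0 < t \<and> t \<le> v \<longrightarrow> (u,t) \<in> trapezoid D r U V l0)))"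

definition initial_bounds ::
  "real \<Rightarrow> real \<Rightarrow> (real \<times> real) set \<Rightarrow> (real \<Rightarrow> real \<Rightarrow> real) \<Rightarrow> (real \<Rightarrow> real \<Rightarrow> real) \<Rightarrow> (real \<Rightarrow> real \<Rightarrow> real)
     \<Rightarrow> real \<Rightarrow> real \<Rightarrow> nat \<Rightarrow> bool" where
  "initial_bounds M \<epsilon> D r Om phi U V l0 \<longleftrightarrow>
     (\<forall>(u,v)\<in>init_curve D r U V l0.
        \<bar>pv r u v + M / r u v\<bar> \<le> \<epsilon> * M / r u v \<and>
        \<bar>pu r u v + M / r u v\<bar> \<le> \<epsilon> * M / r u v \<and>
        \<bar>(Om u v)\<^sup>2 - 2 * M / r u v\<bar> \<le> \<epsilon> * M / r u v \<and>
        \<bar>pu phi u v\<bar> \<le> \<epsilon> / (r u v)\<^sup>2 \<and>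
        \<bar>pv phi u v\<bar> \<le> \<epsilon> / (r u v)\<^sup>2)"

end

theory Submission imports Defs begin

lemma pdiff_u: "pdiff_on D f \<Longrightarrow> (u,v) \<in> D \<Longrightarrow> ((\<lambda>s. f s v) has_real_derivative pu f u v) (at u)"
  by (auto simp: pdiff_on_def pu_def DERIV_deriv_iff_real_differentiable)

lemma pdiff_v: "pdiff_on D f \<Longrightarrow> (u,v) \<in> D \<Longrightarrow> ((\<lambda>t. f u t) has_real_derivative pv f u v) (at v)"
  by (auto simp: pdiff_on_def pv_def DERIV_deriv_iff_real_differentiable)

lemma clairaut:
  assumes D: "open D" and p: "(x,y) \<in> D"
    and f: "pdiff_on D f" and fu: "pdiff_on D (pu f)" and fv: "pdiff_on D (pv f)"
    and c1: "continuous_on D (case_prod (pv (pu f)))"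
    and c2: "continuous_on D (case_prod (pu (pv f)))"
  shows "pv (pu f) x y = pu (pv f) x y"
proof (rule ccontr)
  let ?a = "pv (pu f) x y" and ?b = "pu (pv f) x y"
  assume ne: "?a \<noteq> ?b"
  define d where "d = \<bar>?a - ?b\<bar> / 2"
  have d: "d > 0" using ne by (simp add: d_def)
  obtain e where e: "e > 0" "ball (x,y) e \<subseteq> D" using D p open_contains_ball by blast
  have "continuous (at (x,y)) (case_prod (pv (pu f)))"
    using c1 p D by (simp add: continuous_on_eq_continuous_at)
  then obtain e1 where e1: "e1 > 0" "\<And>z. dist z (x,y) < e1 \<Longrightarrow> dist (case_prod (pv (pu f)) z) ?a < d"
    using d unfolding continuous_at_eps_delta by force
  have "continuous (at (x,y)) (case_prod (pu (pv f)))"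
    using c2 p D by (simp add: continuous_on_eq_continuous_at)
  then obtain e2 where e2: "e2 > 0" "\<And>z. dist z (x,y) < e2 \<Longrightarrow> dist (case_prod (pu (pv f)) z) ?b < d"
    using d unfolding continuous_at_eps_delta by force
  define h where "h = Min {e, e1, e2} / 4"
  have h: "h > 0" "h \<le> e/4" "h \<le> e1/4" "h \<le> e2/4" using e e1 e2 by (auto simp: h_def)
  have inD: "(s,t) \<in> D" if "x \<le> s" "s \<le> x + h" "y \<le> t" "t \<le> y + h" for s t
  proof -
    have "dist (s,t) (x,y) \<le> \<bar>s - x\<bar> + \<bar>t - y\<bar>"
      by (simp add: dist_Pair_Pair dist_real_def sqrt_sum_squares_le_sum_abs)
    also have "\<dots> \<le> 2*h" using that by auto
    finally have "dist (s,t) (x,y) < e" using h e by linarith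
    then show ?thesis using e(2) by (auto simp: dist_commute)
  qed
  have close: "dist (s,t) (x,y) < min e1 e2" if "x \<le> s" "s \<le> x + h" "y \<le> t" "t \<le> y + h" for s t
  proof -
    have "dist (s,t) (x,y) \<le> \<bar>s - x\<bar> + \<bar>t - y\<bar>"
      by (simp add: dist_Pair_Pair dist_real_def sqrt_sum_squares_le_sum_abs)
    also have "\<dots> \<le> 2*h" using that by auto
    finally show ?thesis using h by auto
  qed
  define Q where "Q = f (x+h) (y+h) - f (x+h) y - f x (y+h) + f x y"
  have d1: "((\<lambda>s. f s (y+h) - f s y) has_real_derivative (pu f s (y+h) - pu f s y)) (at s)"
    if "x \<le> s" "s \<le> x+h" for s
    using that h by (auto intro!: DERIV_diff pdiff_u[OF f] inD)
  obtain \<xi> where xi: "x < \<xi>" "\<xi> < x+h"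
    "(f (x+h) (y+h) - f (x+h) y) - (f x (y+h) - f x y) = (x+h-x) * (pu f \<xi> (y+h) - pu f \<xi> y)"
    using MVT2[of x "x+h" "\<lambda>s. f s (y+h) - f s y" "\<lambda>s. pu f s (y+h) - pu f s y", OF _ d1] h by auto
  have d2: "((\<lambda>t. pu f \<xi> t) has_real_derivative pv (pu f) \<xi> t) (at t)"
    if "y \<le> t" "t \<le> y+h" for t
    using that h xi by (auto intro!: pdiff_v[OF fu] inD)
  obtain \<eta> where eta: "y < \<eta>" "\<eta> < y+h" "pu f \<xi> (y+h) - pu f \<xi> y = (y+h-y) * pv (pu f) \<xi> \<eta>"
    using MVT2[of y "y+h" "\<lambda>t. pu f \<xi> t" "\<lambda>t. pv (pu f) \<xi> t", OF _ d2] h by auto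
  have Q1: "Q = h*h * pv (pu f) \<xi> \<eta>" using xi eta by (simp add: Q_def algebra_simps)
  have d3: "((\<lambda>t. f (x+h) t - f x t) has_real_derivative (pv f (x+h) t - pv f x t)) (at t)"
    if "y \<le> t" "t \<le> y+h" for t
    using that h by (auto intro!: DERIV_diff pdiff_v[OF f] inD)
  obtain \<eta>' where eta': "y < \<eta>'" "\<eta>' < y+h"
    "(f (x+h) (y+h) - f x (y+h)) - (f (x+h) y - f x y) = (y+h-y) * (pv f (x+h) \<eta>' - pv f x \<eta>')"
    using MVT2[of y "y+h" "\<lambda>t. f (x+h) t - f x t" "\<lambda>t. pv f (x+h) t - pv f x t", OF _ d3] h by auto
  have d4: "((\<lambda>s. pv f s \<eta>') has_real_derivative pu (pv f) s \<eta>') (at s)"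
    if "x \<le> s" "s \<le> x+h" for s
    using that h eta' by (auto intro!: pdiff_u[OF fv] inD)
  obtain \<xi>' where xi': "x < \<xi>'" "\<xi>' < x+h" "pv f (x+h) \<eta>' - pv f x \<eta>' = (x+h-x) * pu (pv f) \<xi>' \<eta>'"
    using MVT2[of x "x+h" "\<lambda>s. pv f s \<eta>'" "\<lambda>s. pu (pv f) s \<eta>'", OF _ d4] h by auto
  have Q2: "Q = h*h * pu (pv f) \<xi>' \<eta>'" using xi' eta' by (simp add: Q_def algebra_simps)
  have eq: "pv (pu f) \<xi> \<eta> = pu (pv f) \<xi>' \<eta>'" using Q1 Q2 h by simp
  have "dist (pv (pu f) \<xi> \<eta>) ?a < d" using e1(2)[of "(\<xi>,\<eta>)"] close[of \<xi> \<eta>] xi eta by auto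
  moreover have "dist (pu (pv f) \<xi>' \<eta>') ?b < d" using e2(2)[of "(\<xi>',\<eta>')"] close[of \<xi>' \<eta>'] xi' eta' by auto
  ultimately have "\<bar>?a - ?b\<bar> < 2*d" using eq by (simp add: dist_real_def)
  then show False by (simp add: d_def)
qed


definition swapf :: "(real \<Rightarrow> real \<Rightarrow> real) \<Rightarrow> real \<Rightarrow> real \<Rightarrow> real" where
  "swapf f = (\<lambda>a b. f b a)"

lemma swapf_app[simp]: "swapf f a b = f b a" by (simp add: swapf_def)

lemma pu_swapf: "pu (swapf f) = swapf (pv f)"
  by (rule ext)+ (simp add: pu_def pv_def swapf_def)

lemma pv_swapf: "pv (swapf f) = swapf (pu f)"
  by (rule ext)+ (simp add: pu_def pv_def swapf_def)

definition reg :: "(real \<times> real) set \<Rightarrow> (real \<Rightarrow> real \<Rightarrow> real) \<Rightarrow> bool" where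
  "reg D f \<longleftrightarrow> pdiff_on D f \<and> continuous_on D (case_prod f)"

lemma pdiff_on_swap: "pdiff_on D f \<Longrightarrow> pdiff_on (prod.swap ` D) (swapf f)"
  unfolding pdiff_on_def by (auto simp: swapf_def)

lemma cont_swap: "continuous_on D (case_prod f) \<Longrightarrow> continuous_on (prod.swap ` D) (case_prod (swapf f))"
proof -
  assume c: "continuous_on D (case_prod f)"
  have "case_prod (swapf f) = case_prod f \<circ> prod.swap" by (auto simp: fun_eq_iff)
  moreover have "continuous_on (prod.swap ` D) (case_prod f \<circ> prod.swap)"
    by (rule continuous_on_compose) (auto intro: continuous_on_subset[OF c] continuous_on_swap)
  ultimately show ?thesis by simp
qed

lemma reg_swap: "reg D f \<Longrightarrow> reg (prod.swap ` D) (swapf f)"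
  by (simp add: reg_def pdiff_on_swap cont_swap)

definition Sol :: "(real \<times> real) set \<Rightarrow> (real \<Rightarrow> real \<Rightarrow> real) \<Rightarrow> (real \<Rightarrow> real \<Rightarrow> real) \<Rightarrow> (real \<Rightarrow> real \<Rightarrow> real) \<Rightarrow> bool"
  where
  "Sol D r Om phi \<longleftrightarrow> open D \<and> reg D r \<and> reg D (pu r) \<and> reg D (pv r) \<and> reg D Om \<and>
     reg D phi \<and> reg D (pu phi) \<and> reg D (pv phi) \<and>
     (\<forall>u v. (u,v)\<in>D \<longrightarrow> r u v > 0 \<and> Om u v > 0 \<and>
        r u v * pu (pv r) u v = - pu r u v * pv r u v - (1/4) * (Om u v)\<^sup>2 \<and>
        r u v * pv (pu r) u v = - pu r u v * pv r u v - (1/4) * (Om u v)\<^sup>2 \<and>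
        r u v * pu (pv phi) u v = - pu r u v * pv phi u v - pv r u v * pu phi u v \<and>
        r u v * pv (pu phi) u v = - pv r u v * pu phi u v - pu r u v * pv phi u v \<and>
        pu (\<lambda>a b. pu r a b / (Om a b)\<^sup>2) u v = - r u v * (pu phi u v)\<^sup>2 / (Om u v)\<^sup>2 \<and>
        pv (\<lambda>a b. pv r a b / (Om a b)\<^sup>2) u v = - r u v * (pv phi u v)\<^sup>2 / (Om u v)\<^sup>2)"

lemma open_swap: "open D \<Longrightarrow> open (prod.swap ` (D::(real\<times>real) set))"
proof -
  assume "open D"
  moreover have "prod.swap ` D = prod.swap -` D"
  proof (rule set_eqI)
    fix x :: "real \<times> real"
    show "x \<in> prod.swap ` D \<longleftrightarrow> x \<in> prod.swap -` D"
      using image_eqI[of x prod.swap "prod.swap x" D] by auto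
  qed
  ultimately show ?thesis
    using continuous_open_vimage[of D prod.swap] continuous_on_swap[of UNIV]
      continuous_on_eq_continuous_at[OF open_UNIV, of prod.swap] by auto
qed

lemma Sol_swap: "Sol D r Om phi \<Longrightarrow> Sol (prod.swap ` D) (swapf r) (swapf Om) (swapf phi)"
proof -
  assume S: "Sol D r Om phi"
  have e1: "(\<lambda>a b. pu (swapf r) a b / (swapf Om a b)\<^sup>2) = swapf (\<lambda>a b. pv r a b / (Om a b)\<^sup>2)"
    by (simp only: pu_swapf) (simp add: swapf_def)
  have e2: "(\<lambda>a b. pv (swapf r) a b / (swapf Om a b)\<^sup>2) = swapf (\<lambda>a b. pu r a b / (Om a b)\<^sup>2)"
    by (simp only: pv_swapf) (simp add: swapf_def)
  have R1: "pu (\<lambda>a b. pv r b a / (Om b a)\<^sup>2) u v = pv (\<lambda>a b. pv r a b / (Om a b)\<^sup>2) v u" for u v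
    by (simp add: pu_def pv_def swapf_def)
  have R2: "pv (\<lambda>a b. pu r b a / (Om b a)\<^sup>2) u v = pu (\<lambda>a b. pu r a b / (Om a b)\<^sup>2) v u" for u v
    by (simp add: pu_def pv_def swapf_def)
  show ?thesis using S
    unfolding Sol_def pu_swapf pv_swapf
    by (auto intro!: reg_swap open_swap simp: algebra_simps R1 R2)
qed

lemma C2_reg: "C2_on D f \<Longrightarrow> reg D f \<and> reg D (pu f) \<and> reg D (pv f)"
  by (simp add: C2_on_def reg_def)

lemma ESF_Sol: "ESF_solution D r Om phi \<Longrightarrow> Sol D r Om phi"
proof -
  assume E: "ESF_solution D r Om phi"
  have o: "open D" and cr: "C2_on D r" and co: "C2_on D Om" and cp: "C2_on D phi"
    using E by (auto simp: ESF_solution_def)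
  have sr: "pv (pu r) u v = pu (pv r) u v" if "(u,v)\<in>D" for u v
    using cr o that by (intro clairaut) (auto simp: C2_on_def)
  have sp: "pv (pu phi) u v = pu (pv phi) u v" if "(u,v)\<in>D" for u v
    using cp o that by (intro clairaut) (auto simp: C2_on_def)
  show ?thesis
    unfolding Sol_def using E C2_reg[OF cr] C2_reg[OF cp] co sr sp
    by (auto simp: ESF_solution_def C2_on_def reg_def algebra_simps)
qed


lemma DERIV_pu: "DERIV (\<lambda>s. f s v) u :> d \<Longrightarrow> pu f u v = d"
  by (simp add: pu_def DERIV_imp_deriv)

lemma reg_Du: "reg D f \<Longrightarrow> (x,v)\<in>D \<Longrightarrow> DERIV (\<lambda>s. f s v) x :> pu f x v"
  using pdiff_u reg_def by blast

lemma cmp1: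
  fixes f F g c \<gamma> :: "real \<Rightarrow> real" and S x0 x1 :: real
  assumes x: "x0 \<le> x1"
    and df: "\<And>x. x0 \<le> x \<Longrightarrow> x \<le> x1 \<Longrightarrow> DERIV f x :> \<gamma> x * f x + c x * g x"
    and dF: "\<And>x. x0 \<le> x \<Longrightarrow> x \<le> x1 \<Longrightarrow> DERIV F x :> c x * (S - F x)"
    and cg: "\<And>x. x0 \<le> x \<Longrightarrow> x \<le> x1 \<Longrightarrow> c x \<ge> 0 \<and> \<gamma> x \<le> - c x"
    and gS: "\<And>x. x0 < x \<Longrightarrow> x \<le> x1 \<Longrightarrow> g x \<le> S"
    and F0: "\<And>x. x0 \<le> x \<Longrightarrow> x \<le> x1 \<Longrightarrow> F x \<ge> 0"
    and init: "f x0 \<le> F x0"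
  shows "f x1 \<le> F x1"
proof (rule ccontr)
  assume "\<not> f x1 \<le> F x1"
  hence gt: "f x1 > F x1" by simp
  define Z where "Z = {x \<in> {x0..x1}. f x - F x \<le> 0}"
  have cf: "continuous_on {x0..x1} (\<lambda>x. f x - F x)"
    by (rule continuous_on_diff; rule continuous_at_imp_continuous_on)
       (auto intro: DERIV_isCont[OF df] DERIV_isCont[OF dF])
  have clZ: "closed Z"
  proof -
    have "Z = {x0..x1} \<inter> (\<lambda>x. f x - F x) -` {..0}" by (auto simp: Z_def)
    thus ?thesis using continuous_closed_preimage[OF cf] by auto
  qed
  have x0Z: "x0 \<in> Z" using init x by (auto simp: Z_def)
  have bZ: "bdd_above Z" by (auto simp: Z_def bdd_above_def)
  define y where "y = Sup Z"
  have yZ: "y \<in> Z" unfolding y_def using closed_contains_Sup[OF _ bZ clZ] x0Z by blast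
  hence y: "x0 \<le> y" "y \<le> x1" "f y - F y \<le> 0" by (auto simp: Z_def)
  have pos: "f x - F x > 0" if "y < x" "x \<le> x1" for x
  proof (rule ccontr)
    assume "\<not> f x - F x > 0"
    hence "x \<in> Z" using that y by (auto simp: Z_def)
    hence "x \<le> y" unfolding y_def using bZ by (rule cSup_upper)
    thus False using that by simp
  qed
  have yx1: "y < x1" using y gt by (metis diff_gt_0_iff_gt dual_order.order_iff_strict not_le)
  have dd: "DERIV (\<lambda>x. f x - F x) x :> (\<gamma> x * f x + c x * g x) - c x * (S - F x)"
    if "y \<le> x" "x \<le> x1" for x using that y by (auto intro!: DERIV_diff df dF)
  obtain z where z: "y < z" "z < x1"
    "(f x1 - F x1) - (f y - F y) = (x1 - y) * ((\<gamma> z * f z + c z * g z) - c z * (S - F z))"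
    using MVT2[OF yx1 dd] by auto
  have fz: "f z > F z" using pos[of z] z by simp
  have Fz: "F z \<ge> 0" using F0[of z] y z by simp
  have cz: "c z \<ge> 0" "\<gamma> z \<le> - c z" using cg[of z] y z by auto
  have gz: "g z \<le> S" using gS[of z] y z by simp
  have "\<gamma> z * f z \<le> - c z * f z" using cz fz Fz by (intro mult_right_mono) auto
  moreover have "c z * g z \<le> c z * S" using cz gz by (intro mult_left_mono) auto
  moreover have "c z * (f z - F z) \<ge> 0" using cz fz by simp
  ultimately have "(\<gamma> z * f z + c z * g z) - c z * (S - F z) \<le> 0" by (simp add: algebra_simps)
  hence "(x1 - y) * ((\<gamma> z * f z + c z * g z) - c z * (S - F z)) \<le> 0"
    using yx1 by (simp add: mult_nonneg_nonpos)
  thus False using z(3) y(3) gt by linarith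
qed


lemma alg_A:
  fixes R nu la a b Om X Y :: real
  assumes "R \<noteq> 0" "nu \<noteq> 0" "la \<noteq> 0" "R*X = -nu*a - la*b" "R*Y = -nu*la - 1/4*Om^2"
  shows "((nu*a + R*X)*la - R*a*Y)/(la*la) = (nu/R + Om^2/(4*R*la)) * (R*a/la) + (-nu/R) * (R*b/nu)"
proof -
  have 1: "nu*a + R*X = -la*b" using assms by simp
  have 2: "R*a*Y = a*(-nu*la - 1/4*Om^2)" using assms(5) by (metis mult.assoc mult.commute)
  have r1: "(nu/R)*(R*a/la) = nu*a/la" using assms(1) by simp
  have r2: "(Om^2/(4*R*la))*(R*a/la) = a*Om^2/(4*(la*la))" using assms(1) by (simp add: mult.commute)
  have r3: "(-nu/R)*(R*b/nu) = -b" using assms(1,2) by simp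
  have l: "((-la*b)*la - a*(-nu*la - 1/4*Om^2))/(la*la) = -b + nu*a/la + a*Om^2/(4*(la*la))"
    using assms(3) by (simp add: divide_simps) (simp add: algebra_simps)
  show ?thesis unfolding 1 2 distrib_right r1 r2 r3 l by simp
qed

lemma swap_mem[simp]: "((u,v) \<in> prod.swap ` X) = ((v,u) \<in> X)"
proof
  assume "(u,v) \<in> prod.swap ` X" thus "(v,u) \<in> X" by auto
next
  assume "(v,u) \<in> X" thus "(u,v) \<in> prod.swap ` X" using image_eqI[of "(u,v)" prod.swap "(v,u)" X] by simp
qed

locale esf =
  fixes D :: "(real \<times> real) set" and r Om phi :: "real \<Rightarrow> real \<Rightarrow> real"
    and U V r0 M eps :: real and T I :: "(real \<times> real) set"
  assumes sol: "Sol D r Om phi"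
    and r0: "0 < r0" and Mpos: "0 < M" and eps: "0 < eps" "eps \<le> 1/100"
    and T_def: "T = {(u,v). (u,v)\<in>D \<and> U<u \<and> V<v \<and> r u v < r0}"
    and I_def: "I = {(u,v). (u,v)\<in>D \<and> U\<le>u \<and> V\<le>v \<and> r u v = r0}"
    and signs: "\<And>u v. (u,v)\<in>T \<Longrightarrow> pu r u v < 0 \<and> pv r u v < 0"
    and useg: "\<And>u v. (u,v)\<in>T \<Longrightarrow> \<exists>u0. U \<le> u0 \<and> u0 < u \<and> (u0,v)\<in>I \<and> (\<forall>s. u0<s \<and> s\<le>u \<longrightarrow> (s,v)\<in>T)"
    and vseg: "\<And>u v. (u,v)\<in>T \<Longrightarrow> \<exists>v0. V \<le> v0 \<and> v0 < v \<and> (u,v0)\<in>I \<and> (\<forall>t. v0<t \<and> t\<le>v \<longrightarrow> (u,t)\<in>T)"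
    and init: "\<And>u v. (u,v)\<in>I \<Longrightarrow> \<bar>pv r u v + M/r0\<bar> \<le> eps*M/r0 \<and> \<bar>pu r u v + M/r0\<bar> \<le> eps*M/r0 \<and>
        \<bar>(Om u v)\<^sup>2 - 2*M/r0\<bar> \<le> eps*M/r0 \<and> \<bar>pu phi u v\<bar> \<le> eps/r0\<^sup>2 \<and> \<bar>pv phi u v\<bar> \<le> eps/r0\<^sup>2"
begin

definition k :: real where "k = (2+eps)/(1-eps)"

lemma k: "0 < k" "k \<le> 21/10"
  using eps by (auto simp: k_def field_simps)

lemma openD: "open D" using sol by (simp add: Sol_def)

lemma regs: "reg D r" "reg D (pu r)" "reg D (pv r)" "reg D Om" "reg D phi" "reg D (pu phi)" "reg D (pv phi)"
  using sol by (auto simp: Sol_def)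

lemma eqs:
  assumes "(u,v)\<in>D"
  shows "r u v > 0" "Om u v > 0"
    "r u v * pu (pv r) u v = - pu r u v * pv r u v - (1/4) * (Om u v)\<^sup>2"
    "r u v * pu (pv phi) u v = - pu r u v * pv phi u v - pv r u v * pu phi u v"
    "pu (\<lambda>a b. pu r a b / (Om a b)\<^sup>2) u v = - r u v * (pu phi u v)\<^sup>2 / (Om u v)\<^sup>2"
  using sol assms unfolding Sol_def by blast+

lemma TD: "(u,v)\<in>T \<Longrightarrow> (u,v)\<in>D" and ID: "(u,v)\<in>I \<Longrightarrow> (u,v)\<in>D"
  by (auto simp: T_def I_def)

lemma Tr: "(u,v)\<in>T \<Longrightarrow> r u v < r0" and Ir: "(u,v)\<in>I \<Longrightarrow> r u v = r0"
  by (auto simp: T_def I_def)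

lemma initf:
  assumes "(u,v)\<in>I"
  shows "pu r u v \<le> -(1-eps)*M/r0" "pu r u v \<ge> -(1+eps)*M/r0"
    "pv r u v \<le> -(1-eps)*M/r0" "pv r u v \<ge> -(1+eps)*M/r0"
    "(Om u v)\<^sup>2 \<le> (2+eps)*M/r0" "\<bar>pu phi u v\<bar> \<le> eps/r0\<^sup>2" "\<bar>pv phi u v\<bar> \<le> eps/r0\<^sup>2"
    "pu r u v < 0" "pv r u v < 0"
proof -
  note i = init[OF assms]
  have a: "pu r u v + M/r0 \<le> eps*M/r0" "-(eps*M/r0) \<le> pu r u v + M/r0"
    "pv r u v + M/r0 \<le> eps*M/r0" "-(eps*M/r0) \<le> pv r u v + M/r0"
    "(Om u v)\<^sup>2 - 2*M/r0 \<le> eps*M/r0"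
    using i by (auto simp: abs_le_iff)
  show "pu r u v \<le> -(1-eps)*M/r0" "pu r u v \<ge> -(1+eps)*M/r0"
    "pv r u v \<le> -(1-eps)*M/r0" "pv r u v \<ge> -(1+eps)*M/r0"
    "(Om u v)\<^sup>2 \<le> (2+eps)*M/r0"
    using a by (auto simp: field_simps diff_divide_distrib add_divide_distrib)
  show "\<bar>pu phi u v\<bar> \<le> eps/r0\<^sup>2" "\<bar>pv phi u v\<bar> \<le> eps/r0\<^sup>2" using i by auto
  have "(1-eps)*M/r0 > 0" using eps Mpos r0 by auto
  thus "pu r u v < 0" "pv r u v < 0" using a by (auto simp: field_simps diff_divide_distrib add_divide_distrib)
qed

lemma seg_in:
  assumes "(u0,v)\<in>I" "\<forall>s. u0<s \<and> s\<le>u \<longrightarrow> (s,v)\<in>T" "u0 \<le> x" "x \<le> u"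
  shows "(x,v)\<in>D" "pu r x v < 0" "pv r x v < 0" "r x v \<le> r0"
proof -
  have "x = u0 \<or> (x,v)\<in>T" using assms by force
  thus "(x,v)\<in>D" "pu r x v < 0" "pv r x v < 0" "r x v \<le> r0"
    using assms(1) initf[OF assms(1)] ID signs TD Tr Ir by (auto intro: less_imp_le)
qed

lemma Du: "(x,v)\<in>D \<Longrightarrow> DERIV (\<lambda>s. r s v) x :> pu r x v"
  "(x,v)\<in>D \<Longrightarrow> DERIV (\<lambda>s. pu r s v) x :> pu (pu r) x v"
  "(x,v)\<in>D \<Longrightarrow> DERIV (\<lambda>s. pv r s v) x :> pu (pv r) x v"
  "(x,v)\<in>D \<Longrightarrow> DERIV (\<lambda>s. Om s v) x :> pu Om x v"
  "(x,v)\<in>D \<Longrightarrow> DERIV (\<lambda>s. pv phi s v) x :> pu (pv phi) x v"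
  using regs reg_Du by blast+

lemma Ray_deriv:
  assumes "(y,v)\<in>D"
  shows "DERIV (\<lambda>s. pu r s v / (Om s v)\<^sup>2) y :> - r y v * (pu phi y v)\<^sup>2 / (Om y v)\<^sup>2"
proof -
  have om: "Om y v \<noteq> 0" using eqs(2)[OF assms] by simp
  have om2: "(Om y v)\<^sup>2 \<noteq> 0" using om by simp
  obtain E where d: "DERIV (\<lambda>s. pu r s v / (Om s v)\<^sup>2) y :> E"
    using DERIV_divide[OF Du(2)[OF assms] DERIV_power[OF Du(4)[OF assms]] om2] by blast
  have "pu (\<lambda>a b. pu r a b / (Om a b)\<^sup>2) y v = E"
    by (rule DERIV_pu[where f="\<lambda>a b. pu r a b / (Om a b)\<^sup>2", OF d])
  with d eqs(5)[OF assms] show ?thesis by simp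
qed

lemma OmU:
  assumes a: "(u0,v)\<in>I" "\<forall>s. u0<s \<and> s\<le>u \<longrightarrow> (s,v)\<in>T" "u0 \<le> x" "x \<le> u"
  shows "(Om x v)\<^sup>2 \<le> k * (- pu r x v)"
proof -
  define F where "F = (\<lambda>s. pu r s v / (Om s v)\<^sup>2)"
  have "F x \<le> F u0"
  proof (rule DERIV_nonpos_imp_nonincreasing[OF a(3)])
    fix y assume y: "u0 \<le> y" "y \<le> x"
    hence yD: "(y,v)\<in>D" using seg_in[OF a(1,2)] a by auto
    show "\<exists>d. DERIV F y :> d \<and> d \<le> 0"
      using Ray_deriv[OF yD] eqs(1)[OF yD] unfolding F_def
      by (intro exI[of _ "- r y v * (pu phi y v)\<^sup>2 / (Om y v)\<^sup>2"]) (auto simp: divide_nonpos_pos)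
  qed
  moreover have "F u0 \<le> - 1 / k"
  proof -
    have o: "(Om u0 v)\<^sup>2 > 0" using eqs(2)[OF ID[OF a(1)]] by simp
    have n: "pu r u0 v \<le> -(1-eps)*M/r0" "(Om u0 v)\<^sup>2 \<le> (2+eps)*M/r0" using initf[OF a(1)] by auto
    have "(1-eps)*M/r0 > 0" using eps Mpos r0 by auto
    hence neg: "-(1-eps)*M/r0 < 0" by linarith
    have "F u0 \<le> (-(1-eps)*M/r0) / (Om u0 v)\<^sup>2"
      unfolding F_def using divide_right_mono[OF n(1), of "(Om u0 v)\<^sup>2"] o by simp
    also have "\<dots> \<le> (-(1-eps)*M/r0) / ((2+eps)*M/r0)"
    proof (rule divide_left_mono_neg)
      show "0 < (Om u0 v)\<^sup>2 * ((2+eps)*M/r0)" using o eps Mpos r0 by (intro mult_pos_pos) auto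
    qed (use n neg in auto)
    also have "\<dots> = -(1-eps)/(2+eps)" using Mpos r0 eps by (simp add: divide_simps)
    also have "\<dots> = -1/k" by (simp add: k_def)
    finally show ?thesis .
  qed
  ultimately have f: "pu r x v / (Om x v)\<^sup>2 \<le> -1/k" unfolding F_def by simp
  have o: "(Om x v)\<^sup>2 > 0" using eqs(2)[OF seg_in(1)[OF a]] by simp
  have "pu r x v \<le> -1/k * (Om x v)\<^sup>2" using f o by (simp add: pos_divide_le_eq)
  thus ?thesis using k by (simp add: field_simps)
qed

lemma LamU:
  assumes "(u,v)\<in>T"
  shows "-(1+eps)*M - k*r0/4 \<le> r u v * pv r u v \<and> r u v * pv r u v \<le> -(1-eps)*M"
proof -
  obtain u0 where a: "U \<le> u0" "u0<u" "(u0,v)\<in>I" "\<forall>s. u0<s \<and> s\<le>u \<longrightarrow> (s,v)\<in>T"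
    using useg[OF assms] by blast
  have yD: "(y,v)\<in>D" if "u0 \<le> y" "y \<le> u" for y using seg_in[OF a(3,4) that] by simp
  have dg: "DERIV (\<lambda>s. r s v * pv r s v) y :> -(1/4)*(Om y v)\<^sup>2" if "u0 \<le> y" "y \<le> u" for y
    using DERIV_mult[OF Du(1)[OF yD[OF that]] Du(3)[OF yD[OF that]]] eqs(3)[OF yD[OF that]]
    by (simp add: algebra_simps)
  have ru0: "r u0 v = r0" using Ir[OF a(3)] .
  have up: "r u v * pv r u v \<le> r u0 v * pv r u0 v"
    by (rule DERIV_nonpos_imp_nonincreasing[of u0 u]) (use a dg in \<open>auto intro!: exI\<close>)
  have "r u0 v * pv r u0 v \<le> -(1-eps)*M" using initf(3)[OF a(3)] ru0 r0
    by (simp add: field_simps)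
  moreover
  have dh: "DERIV (\<lambda>s. r s v * pv r s v - k/4 * r s v) y :> -(1/4)*(Om y v)\<^sup>2 - k/4 * pu r y v"
    if "u0 \<le> y" "y \<le> u" for y
    using DERIV_diff[OF dg[OF that] DERIV_cmult[OF Du(1)[OF yD[OF that]], of "k/4"]] by simp
  have lo: "r u0 v * pv r u0 v - k/4 * r u0 v \<le> r u v * pv r u v - k/4 * r u v"
  proof (rule DERIV_nonneg_imp_nondecreasing[of u0 u])
    fix y assume y: "u0 \<le> y" "y \<le> u"
    have "(Om y v)\<^sup>2 \<le> k * (- pu r y v)" using OmU[OF a(3,4) y] .
    thus "\<exists>d. DERIV (\<lambda>s. r s v * pv r s v - k/4 * r s v) y :> d \<and> d \<ge> 0"
      using dh[OF y] by (intro exI) (auto simp: algebra_simps)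
  qed (use a in auto)
  have "r u0 v * pv r u0 v \<ge> -(1+eps)*M" using initf(4)[OF a(3)] ru0 r0
    by (simp add: field_simps)
  moreover have "r u v > 0" using eqs(1)[OF TD[OF assms]] .
  moreover have "k/4 * r u v \<ge> 0" using k \<open>r u v > 0\<close> by simp
  moreover have "k/4 * r u0 v = k*r0/4" using ru0 by simp
  ultimately show ?thesis using up lo by linarith
qed

definition Af :: "real \<Rightarrow> real \<Rightarrow> real" where "Af x y = r x y * pv phi x y / pv r x y"
definition Bf :: "real \<Rightarrow> real \<Rightarrow> real" where "Bf x y = r x y * pu phi x y / pu r x y"
definition m0 :: real where "m0 = 2*eps/M"

lemma A_deriv:
  assumes yD: "(y,v)\<in>D" and nz: "pu r y v \<noteq> 0" "pv r y v \<noteq> 0"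
  shows "DERIV (\<lambda>s. Af s v) y :> (pu r y v / r y v + (Om y v)\<^sup>2/(4 * r y v * pv r y v)) * Af y v + (- pu r y v / r y v) * Bf y v"
proof -
  have d: "DERIV (\<lambda>s. r s v * pv phi s v / pv r s v) y :>
      ((pu r y v * pv phi y v + r y v * pu (pv phi) y v) * pv r y v - r y v * pv phi y v * pu (pv r) y v) / (pv r y v * pv r y v)"
    using DERIV_divide[OF DERIV_mult[OF Du(1)[OF yD] Du(5)[OF yD]] Du(3)[OF yD] nz(2)] by (simp add: mult.commute)
  have rz: "r y v \<noteq> 0" using eqs(1)[OF yD] by simp
  have "((pu r y v * pv phi y v + r y v * pu (pv phi) y v) * pv r y v - r y v * pv phi y v * pu (pv r) y v) / (pv r y v * pv r y v)
      = (pu r y v / r y v + (Om y v)\<^sup>2/(4 * r y v * pv r y v)) * Af y v + (- pu r y v / r y v) * Bf y v"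
    unfolding Af_def Bf_def
    by (rule alg_A[OF rz nz(1) nz(2)]) (use eqs(3,4)[OF yD] in \<open>auto simp: algebra_simps\<close>)
  with d show ?thesis by (simp add: Af_def[abs_def])
qed

lemma A_init: "(u0,v)\<in>I \<Longrightarrow> \<bar>Af u0 v\<bar> \<le> m0"
proof -
  assume a: "(u0,v)\<in>I"
  note f = initf[OF a]
  have ru: "r u0 v = r0" using Ir[OF a] .
  have "(1-eps)*M/r0 \<le> - pv r u0 v" using f(3) r0 by (simp add: divide_simps algebra_simps)
  hence l: "\<bar>pv r u0 v\<bar> \<ge> (1-eps)*M/r0" using f(9) by simp
  have lp: "(1-eps)*M/r0 > 0" using eps Mpos r0 by simp
  have "\<bar>Af u0 v\<bar> = r0 * \<bar>pv phi u0 v\<bar> / \<bar>pv r u0 v\<bar>" using ru r0 by (simp add: Af_def abs_mult)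
  also have "\<dots> \<le> r0 * (eps/r0\<^sup>2) / \<bar>pv r u0 v\<bar>"
    using f(7) r0 by (intro divide_right_mono mult_left_mono) auto
  also have "\<dots> \<le> r0 * (eps/r0\<^sup>2) / ((1-eps)*M/r0)"
  proof (rule divide_left_mono)
    show "0 < \<bar>pv r u0 v\<bar> * ((1-eps)*M/r0)" using l lp by (intro mult_pos_pos) auto
  qed (use l eps r0 in auto)
  also have "\<dots> = eps / ((1-eps)*M)" using r0 by (simp add: field_simps power2_eq_square)
  also have "\<dots> \<le> m0" using eps Mpos by (simp add: m0_def field_simps)
  finally show ?thesis .
qed

lemma ACmp:
  assumes a: "(u0,v)\<in>I" "\<forall>s. u0<s \<and> s\<le>u \<longrightarrow> (s,v)\<in>T" "u0 \<le> u"
    and S: "S \<ge> m0" and B: "\<forall>s. u0<s \<and> s\<le>u \<longrightarrow> \<bar>Bf s v\<bar> \<le> S"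
  shows "\<bar>Af u v\<bar> \<le> S - (S - m0) * r u v / r0"
proof -
  define F where "F = (\<lambda>s. S - (S - m0) * r s v / r0)"
  define c where "c = (\<lambda>s. - pu r s v / r s v)"
  define \<gamma> where "\<gamma> = (\<lambda>s. pu r s v / r s v + (Om s v)\<^sup>2/(4 * r s v * pv r s v))"
  have sg: "(x,v)\<in>D" "pu r x v < 0" "pv r x v < 0" "r x v \<le> r0" "r x v > 0"
    if "u0 \<le> x" "x \<le> u" for x using seg_in[OF a(1,2) that] eqs(1)[OF seg_in(1)[OF a(1,2) that]] by auto
  have m0: "m0 \<ge> 0" using eps Mpos by (simp add: m0_def)
  have dA: "DERIV (\<lambda>s. Af s v) x :> \<gamma> x * Af x v + c x * Bf x v" if "u0 \<le> x" "x \<le> u" for x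
    using A_deriv[of x v] sg[OF that] unfolding \<gamma>_def c_def by auto
  have dF: "DERIV F x :> c x * (S - F x)" if "u0 \<le> x" "x \<le> u" for x
  proof -
    have "DERIV F x :> - ((S - m0) * pu r x v / r0)"
      unfolding F_def using Du(1)[OF sg(1)[OF that]] r0 by (auto intro!: derivative_eq_intros)
    moreover have "- ((S - m0) * pu r x v / r0) = c x * (S - F x)"
      using sg(5)[OF that] r0 by (simp add: c_def F_def field_simps)
    ultimately show ?thesis by simp
  qed
  have cg: "c x \<ge> 0 \<and> \<gamma> x \<le> - c x" if "u0 \<le> x" "x \<le> u" for x
  proof -
    have "(Om x v)\<^sup>2/(4 * r x v * pv r x v) \<le> 0"
      using sg[OF that] by (intro divide_nonneg_neg) (auto simp: mult_pos_neg)
    moreover have "pu r x v / r x v \<le> 0" using sg[OF that] by (simp add: divide_nonpos_pos)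
    ultimately show ?thesis by (simp add: c_def \<gamma>_def)
  qed
  have F0: "F x \<ge> 0" if "u0 \<le> x" "x \<le> u" for x
  proof -
    have "(S - m0) * r x v / r0 \<le> (S - m0)"
      using sg[OF that] S r0 by (simp add: mult_left_mono divide_le_eq)
    thus ?thesis using m0 by (simp add: F_def)
  qed
  have Fu0: "F u0 = m0" using Ir[OF a(1)] r0 by (simp add: F_def)
  have "Af u v \<le> F u"
    by (rule cmp1[of u0 u "\<lambda>s. Af s v" \<gamma> c "\<lambda>s. Bf s v" F S])
       (use a dA dF cg F0 B A_init[OF a(1)] Fu0 in auto)
  moreover have "- Af u v \<le> F u"
  proof (rule cmp1[of u0 u "\<lambda>s. - Af s v" \<gamma> c "\<lambda>s. - Bf s v" F S])
    fix x assume x: "u0 \<le> x" "x \<le> u"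
    show "DERIV (\<lambda>s. - Af s v) x :> \<gamma> x * - Af x v + c x * - Bf x v"
      using DERIV_minus[OF dA[OF x]] by simp
  qed (use a dF cg F0 B A_init[OF a(1)] Fu0 in auto)
  ultimately show ?thesis by (simp add: F_def)
qed

lemma Dv: "(u,y)\<in>D \<Longrightarrow> DERIV (\<lambda>t. r u t) y :> pv r u y"
  using regs(1) pdiff_v reg_def by blast

lemma swap_interp: "esf (prod.swap ` D) (swapf r) (swapf Om) (swapf phi) V U r0 M eps (prod.swap ` T) (prod.swap ` I)"
proof
  show "Sol (prod.swap ` D) (swapf r) (swapf Om) (swapf phi)" by (rule Sol_swap[OF sol])
  show "prod.swap ` T = {(u,v). (u,v)\<in>prod.swap ` D \<and> V<u \<and> U<v \<and> swapf r u v < r0}"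
    by (rule set_eqI, case_tac x) (auto simp: T_def)
  show "prod.swap ` I = {(u,v). (u,v)\<in>prod.swap ` D \<and> V\<le>u \<and> U\<le>v \<and> swapf r u v = r0}"
    by (rule set_eqI, case_tac x) (auto simp: I_def)
  fix u v
  show "(u,v)\<in>prod.swap ` T \<Longrightarrow> pu (swapf r) u v < 0 \<and> pv (swapf r) u v < 0"
    using signs[of v u] by (simp add: pu_swapf pv_swapf)
  show "(u,v)\<in>prod.swap ` T \<Longrightarrow> \<exists>u0. V \<le> u0 \<and> u0 < u \<and> (u0,v)\<in>prod.swap ` I \<and> (\<forall>s. u0<s \<and> s\<le>u \<longrightarrow> (s,v)\<in>prod.swap ` T)"
    using vseg[of v u] by simp
  show "(u,v)\<in>prod.swap ` T \<Longrightarrow> \<exists>v0. U \<le> v0 \<and> v0 < v \<and> (u,v0)\<in>prod.swap ` I \<and> (\<forall>t. v0<t \<and> t\<le>v \<longrightarrow> (u,t)\<in>prod.swap ` T)"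
    using useg[of v u] by simp
  show "(u,v)\<in>prod.swap ` I \<Longrightarrow> \<bar>pv (swapf r) u v + M/r0\<bar> \<le> eps*M/r0 \<and> \<bar>pu (swapf r) u v + M/r0\<bar> \<le> eps*M/r0 \<and>
        \<bar>(swapf Om u v)\<^sup>2 - 2*M/r0\<bar> \<le> eps*M/r0 \<and> \<bar>pu (swapf phi) u v\<bar> \<le> eps/r0\<^sup>2 \<and> \<bar>pv (swapf phi) u v\<bar> \<le> eps/r0\<^sup>2"
    using init[of v u] by (simp add: pu_swapf pv_swapf)
qed (use r0 Mpos eps in auto)

interpretation sw: esf "prod.swap ` D" "swapf r" "swapf Om" "swapf phi" V U r0 M eps "prod.swap ` T" "prod.swap ` I"
  by (rule swap_interp)

lemma sw_facts: "esf.Af (swapf r) (swapf phi) u v = Bf v u"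
  "esf.Bf (swapf r) (swapf phi) u v = Af v u"
  "esf.m0 M eps = m0"
  by (simp_all only: sw.Af_def sw.Bf_def Af_def Bf_def pu_swapf pv_swapf swapf_app sw.m0_def m0_def)

lemma BCmp:
  assumes a: "(u,v0)\<in>I" "\<forall>t. v0<t \<and> t\<le>v \<longrightarrow> (u,t)\<in>T" "v0 \<le> v"
    and S: "S \<ge> m0" and A: "\<forall>t. v0<t \<and> t\<le>v \<longrightarrow> \<bar>Af u t\<bar> \<le> S"
  shows "\<bar>Bf u v\<bar> \<le> S - (S - m0) * r u v / r0"
proof -
  have 1: "(v0, u) \<in> prod.swap ` I" using a(1) by simp
  have 2: "\<forall>s. v0 < s \<and> s \<le> v \<longrightarrow> (s, u) \<in> prod.swap ` T" using a(2) by simp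
  have 3: "esf.m0 M eps \<le> S" using S by simp
  have 4: "\<forall>s. v0 < s \<and> s \<le> v \<longrightarrow> \<bar>esf.Bf (swapf r) (swapf phi) s u\<bar> \<le> S"
      using A by (simp only: sw_facts(1,2))
  have "\<bar>esf.Af (swapf r) (swapf phi) v u\<bar> \<le> S - (S - esf.m0 M eps) * swapf r v u / r0"
    by (rule sw.ACmp[OF 1 2 a(3) 3 4])
  thus ?thesis by (simp only: sw_facts(1,2) swapf_app)
qed

lemma NuV:
  assumes "(u,v)\<in>T"
  shows "-(1+eps)*M - k*r0/4 \<le> r u v * pu r u v \<and> r u v * pu r u v \<le> -(1-eps)*M"
proof -
  have "(v,u) \<in> prod.swap ` T" using assms by simp
  from sw.LamU[OF this] show ?thesis by (simp only: pv_swapf swapf_app)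
qed

lemma openT: "open T"
proof -
  have c: "continuous_on D (case_prod r)" using regs(1) by (simp add: reg_def)
  have "T = (D \<inter> case_prod r -` {..<r0}) \<inter> fst -` {U<..} \<inter> snd -` {V<..}"
    by (auto simp: T_def)
  moreover have "open (D \<inter> case_prod r -` {..<r0})"
    using continuous_open_preimage[OF c openD, of "{..<r0}"] by simp
  ultimately show ?thesis by (auto intro!: open_Int open_vimage_fst open_vimage_snd)
qed

lemma IT: "(x,t) \<in> I \<Longrightarrow> (x,t) \<notin> T" using Ir Tr by fastforce

definition aw :: "real \<Rightarrow> real \<Rightarrow> real" where
  "aw up t = (SOME a. U \<le> a \<and> a < up \<and> (a,t) \<in> I \<and> (\<forall>s. a < s \<and> s \<le> up \<longrightarrow> (s,t) \<in> T))"

definition Dl :: "real \<Rightarrow> real \<Rightarrow> real \<Rightarrow> (real \<times> real) set" where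
  "Dl up vp v0 = {(s,t). v0 < t \<and> t \<le> vp \<and> aw up t < s \<and> s \<le> up}"

definition al :: "real \<Rightarrow> real \<Rightarrow> real \<Rightarrow> real" where
  "al up v0 t = (if t = v0 then up else aw up t)"

context
  fixes up vp v0 :: real
  assumes P: "(up,vp) \<in> T" and V0: "(up,v0) \<in> I" "v0 < vp" "\<forall>t. v0<t \<and> t\<le>vp \<longrightarrow> (up,t)\<in>T"
begin

lemma aw_spec:
  assumes "v0 < t" "t \<le> vp"
  shows "U \<le> aw up t \<and> aw up t < up \<and> (aw up t, t) \<in> I \<and> (\<forall>s. aw up t < s \<and> s \<le> up \<longrightarrow> (s,t) \<in> T)"
proof -
  have "\<exists>a. U \<le> a \<and> a < up \<and> (a,t) \<in> I \<and> (\<forall>s. a < s \<and> s \<le> up \<longrightarrow> (s,t) \<in> T)"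
    using useg[of up t] V0(3) assms by auto
  thus ?thesis unfolding aw_def by (rule someI_ex)
qed

lemma Dl_T: "(s,t) \<in> Dl up vp v0 \<Longrightarrow> (s,t) \<in> T"
  using aw_spec by (auto simp: Dl_def)

lemma Dl_useg:
  assumes "(s,t) \<in> Dl up vp v0" "(a',t) \<in> I" "\<forall>x. a'<x \<and> x\<le>s \<longrightarrow> (x,t)\<in>T" "a' < x" "x \<le> s"
  shows "(x,t) \<in> Dl up vp v0"
proof -
  have t: "v0 < t" "t \<le> vp" "aw up t < s" "s \<le> up" using assms(1) by (auto simp: Dl_def)
  have "aw up t \<le> a'"
  proof (rule ccontr)
    assume "\<not> aw up t \<le> a'"
    hence "(aw up t, t) \<in> T" using assms(3) t by auto
    thus False using IT aw_spec[OF t(1,2)] by blast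
  qed
  thus ?thesis using assms t by (auto simp: Dl_def)
qed

lemma Dl_r:
  assumes "(s,t) \<in> Dl up vp v0"
  shows "r up vp \<le> r s t"
proof -
  have t: "v0 < t" "t \<le> vp" "aw up t < s" "s \<le> up" using assms(1) by (auto simp: Dl_def)
  have "r up t \<le> r s t"
  proof (rule DERIV_nonpos_imp_nonincreasing[of s up "\<lambda>x. r x t"])
    fix x assume x: "s \<le> x" "x \<le> up"
    hence xT: "(x,t) \<in> T" using aw_spec[OF t(1,2)] t by auto
    show "\<exists>y. DERIV (\<lambda>x. r x t) x :> y \<and> y \<le> 0"
      using Du(1)[OF TD[OF xT]] signs[OF xT] by (intro exI[of _ "pu r x t"]) auto
  qed (use t in auto)
  moreover have "r up vp \<le> r up t"
  proof (rule DERIV_nonpos_imp_nonincreasing[of t vp "\<lambda>\<tau>. r up \<tau>"])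
    fix x assume x: "t \<le> x" "x \<le> vp"
    hence xT: "(up,x) \<in> T" using V0(3) t by auto
    show "\<exists>y. DERIV (\<lambda>\<tau>. r up \<tau>) x :> y \<and> y \<le> 0"
      using Dv[OF TD[OF xT]] signs[OF xT] by (intro exI[of _ "pv r up x"]) auto
  qed (use t in auto)
  ultimately show ?thesis by simp
qed

lemma usc:
  assumes "v0 < t1" "t1 \<le> vp" "aw up t1 < s'" "s' \<le> up"
  shows "\<exists>e>0. \<forall>\<tau>. v0 < \<tau> \<and> \<tau> \<le> vp \<and> \<bar>\<tau> - t1\<bar> < e \<longrightarrow> aw up \<tau> < s'"
proof -
  define K where "K = {s'..up} \<times> {t1}"
  have cK: "compact K" unfolding K_def by (intro compact_Times) auto
  have KT: "K \<subseteq> T" using aw_spec[OF assms(1,2)] assms(3) by (auto simp: K_def)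
  obtain e where e: "e > 0" "(\<Union>x\<in>K. ball x e) \<subseteq> T"
    using compact_subset_open_imp_ball_epsilon_subset[OF cK openT KT] by blast
  have "aw up \<tau> < s'" if \<tau>: "v0 < \<tau>" "\<tau> \<le> vp" "\<bar>\<tau> - t1\<bar> < e" for \<tau>
  proof (rule ccontr)
    assume "\<not> aw up \<tau> < s'"
    hence inK: "(aw up \<tau>, t1) \<in> K" using aw_spec[OF \<tau>(1,2)] by (auto simp: K_def)
    have "dist (aw up \<tau>, t1) (aw up \<tau>, \<tau>) = \<bar>\<tau> - t1\<bar>"
      by (simp add: dist_Pair_Pair dist_real_def)
    hence "dist (aw up \<tau>, t1) (aw up \<tau>, \<tau>) < e" using \<tau>(3) by simp
    hence "(aw up \<tau>, \<tau>) \<in> ball (aw up \<tau>, t1) e" by (simp add: mem_ball)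
    hence "(aw up \<tau>, \<tau>) \<in> (\<Union>x\<in>K. ball x e)" using inK by (rule UN_I[rotated])
    hence "(aw up \<tau>, \<tau>) \<in> T" using e(2) by (rule subsetD[rotated])
    thus False using IT aw_spec[OF \<tau>(1,2)] by blast
  qed
  thus ?thesis using e(1) by blast
qed

lemma al_I: "v0 \<le> ts \<Longrightarrow> ts \<le> vp \<Longrightarrow> (al up v0 ts, ts) \<in> I \<and> al up v0 ts \<le> up"
  using aw_spec[of ts] V0 by (auto simp: al_def less_imp_le)

lemma lsc:
  assumes ts: "v0 \<le> ts" "ts \<le> vp"
  shows "\<exists>h0>0. \<forall>h. 0<h \<and> h<h0 \<longrightarrow> (\<exists>e>0. \<forall>\<tau>. v0 < \<tau> \<and> \<tau> \<le> vp \<and> \<bar>\<tau> - ts\<bar> < e \<longrightarrow> al up v0 ts - h \<le> aw up \<tau>)"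
proof -
  define z where "z = al up v0 ts"
  have zI: "(z,ts) \<in> I" "z \<le> up" using al_I[OF ts] by (auto simp: z_def)
  have zD: "(z,ts) \<in> D" using ID[OF zI(1)] .
  have rz: "r z ts = r0" using Ir[OF zI(1)] .
  obtain d where d: "d > 0" "\<forall>h>0. h < d \<longrightarrow> r z ts < r (z - h) ts"
    using DERIV_neg_dec_left[OF Du(1)[OF zD] initf(8)[OF zI(1)]] by blast
  obtain e0 where e0: "e0 > 0" "ball (z,ts) e0 \<subseteq> D" using openD zD open_contains_ball by blast
  have c: "continuous_on D (case_prod r)" using regs(1) by (simp add: reg_def)
  have "\<exists>e>0. \<forall>\<tau>. v0 < \<tau> \<and> \<tau> \<le> vp \<and> \<bar>\<tau> - ts\<bar> < e \<longrightarrow> z - h \<le> aw up \<tau>" if h: "0 < h" "h < min d e0" for h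
  proof -
    define q where "q = (z - h, ts)"
    have qD: "q \<in> D" using e0 h by (auto simp: q_def dist_Pair_Pair dist_real_def)
    have rq: "r (z-h) ts > r0" using d h rz by auto
    have "continuous (at q) (case_prod r)" using c qD openD by (simp add: continuous_on_eq_continuous_at)
    have pos: "r (z-h) ts - r0 > 0" using rq by simp
    obtain e1 where e1: "e1 > 0" "\<And>y. dist y q < e1 \<Longrightarrow> dist (case_prod r y) (case_prod r q) < r (z-h) ts - r0"
      using \<open>continuous (at q) (case_prod r)\<close>[unfolded continuous_at_eps_delta, rule_format, OF pos] by blast
    obtain e2 where e2: "e2 > 0" "ball q e2 \<subseteq> D" using openD qD open_contains_ball by blast
    have "z - h \<le> aw up \<tau>" if \<tau>: "v0 < \<tau>" "\<tau> \<le> vp" "\<bar>\<tau> - ts\<bar> < min e1 e2" for \<tau>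
    proof (rule ccontr)
      assume "\<not> z - h \<le> aw up \<tau>"
      hence "(z - h, \<tau>) \<in> T" using aw_spec[OF \<tau>(1,2)] zI(2) h by auto
      hence lt: "r (z-h) \<tau> < r0" using Tr by blast
      have "dist (z-h, \<tau>) q < e1" using \<tau>(3) by (simp add: q_def dist_Pair_Pair dist_real_def)
      from e1(2)[OF this] have "\<bar>r (z-h) \<tau> - r (z-h) ts\<bar> < r (z-h) ts - r0" by (simp add: q_def dist_real_def)
      thus False using lt by linarith
    qed
    thus ?thesis using e1(1) e2(1) by (intro exI[of _ "min e1 e2"]) auto
  qed
  thus ?thesis using d(1) e0(1) unfolding z_def by (intro exI[of _ "min d e0"]) auto
qed

lemma cl:
  assumes "(ss,ts) \<in> closure (Dl up vp v0)"
  shows "v0 \<le> ts \<and> ts \<le> vp \<and> al up v0 ts \<le> ss \<and> ss \<le> up"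
proof -
  define C where "C = {x. v0 \<le> snd x} \<inter> {x. snd x \<le> vp} \<inter> {x::real\<times>real. fst x \<le> up}"
  have "closed C" unfolding C_def
    by (intro closed_Int closed_Collect_le continuous_on_const continuous_on_fst continuous_on_snd continuous_on_id)
  moreover have "Dl up vp v0 \<subseteq> C" by (auto simp: Dl_def C_def)
  ultimately have "closure (Dl up vp v0) \<subseteq> C" by (rule closure_minimal[rotated])
  hence b: "v0 \<le> ts" "ts \<le> vp" "ss \<le> up" using assms by (auto simp: C_def)
  have "al up v0 ts \<le> ss"
  proof (rule ccontr)
    assume "\<not> al up v0 ts \<le> ss"
    hence dp: "al up v0 ts - ss > 0" by simp
    obtain h0 where h0: "h0 > 0" "\<forall>h. 0<h \<and> h<h0 \<longrightarrow> (\<exists>e>0. \<forall>\<tau>. v0 < \<tau> \<and> \<tau> \<le> vp \<and> \<bar>\<tau> - ts\<bar> < e \<longrightarrow> al up v0 ts - h \<le> aw up \<tau>)"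
      using lsc[OF b(1,2)] by blast
    define h where "h = min (h0/2) ((al up v0 ts - ss)/3)"
    have h3: "h \<le> (al up v0 ts - ss)/3" unfolding h_def by (rule min.cobounded2)
    have h: "0 < h" "h < h0" "3*h \<le> al up v0 ts - ss" using h0 dp h3 by (auto simp: h_def min_def)
    obtain e where e: "e > 0" "\<forall>\<tau>. v0 < \<tau> \<and> \<tau> \<le> vp \<and> \<bar>\<tau> - ts\<bar> < e \<longrightarrow> al up v0 ts - h \<le> aw up \<tau>"
      using h0(2) h by blast
    obtain y where y: "y \<in> Dl up vp v0" "dist y (ss,ts) < min e h"
      using assms e(1) h(1) unfolding closure_approachable by (meson min_less_iff_conj)
    obtain s t where st: "y = (s,t)" by force
    have "\<bar>t - ts\<bar> < e" "\<bar>s - ss\<bar> < h"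
      using y(2) dist_snd_le[of y "(ss,ts)"] dist_fst_le[of y "(ss,ts)"] st by (auto simp: dist_real_def)
    moreover have "v0 < t" "t \<le> vp" "aw up t < s" using y(1) st by (auto simp: Dl_def)
    ultimately have "al up v0 ts - h < ss + h" using e(2) by force
    thus False using h by linarith
  qed
  thus ?thesis using b by simp
qed

definition Eset :: "(real \<times> real) set" where
  "Eset = {q. q \<in> D \<and> pu r (fst q) (snd q) \<noteq> 0 \<and> pv r (fst q) (snd q) \<noteq> 0}"

lemma clE: "closure (Dl up vp v0) \<subseteq> Eset"
proof
  fix q assume q: "q \<in> closure (Dl up vp v0)"
  obtain ss ts where st: "q = (ss,ts)" by force
  have c: "v0 \<le> ts" "ts \<le> vp" "al up v0 ts \<le> ss" "ss \<le> up" using cl q st by auto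
  have "(ss,ts) \<in> I \<or> (ss,ts) \<in> T"
  proof (cases "ts = v0")
    case True thus ?thesis using c V0(1) by (auto simp: al_def)
  next
    case False
    hence v: "v0 < ts" using c by simp
    show ?thesis
    proof (cases "ss = aw up ts")
      case True thus ?thesis using aw_spec[OF v c(2)] by simp
    next
      case False thus ?thesis using aw_spec[OF v c(2)] c v by (auto simp: al_def)
    qed
  qed
  thus "q \<in> Eset"
  proof
    assume a: "(ss,ts) \<in> I"
    thus ?thesis using st initf(8)[OF a] initf(9)[OF a] ID[OF a] by (simp add: Eset_def)
  next
    assume "(ss,ts) \<in> T"
    thus ?thesis using st signs[of ss ts] TD by (simp add: Eset_def)
  qed
qed

lemma Dl_vseg:
  assumes st: "(s,t) \<in> Dl up vp v0" and b: "(s,b) \<in> I" "b < t" "\<forall>\<tau>. b<\<tau> \<and> \<tau>\<le>t \<longrightarrow> (s,\<tau>)\<in>T"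
    and t1: "b < \<tau>1" "\<tau>1 \<le> t"
  shows "(s,\<tau>1) \<in> Dl up vp v0"
proof (rule ccontr)
  assume n1: "(s,\<tau>1) \<notin> Dl up vp v0"
  have stD: "v0 < t" "t \<le> vp" "aw up t < s" "s \<le> up" using st by (auto simp: Dl_def)
  define X where "X = {\<tau>. \<tau>1 \<le> \<tau> \<and> \<tau> \<le> t \<and> (s,\<tau>) \<notin> Dl up vp v0}"
  have X1: "\<tau>1 \<in> X" using n1 t1 by (simp add: X_def)
  have bX: "bdd_above X" by (auto simp: X_def bdd_above_def)
  define \<sigma> where "\<sigma> = Sup X"
  have ne: "X \<noteq> {}" using X1 by auto
  have \<sigma>1: "\<tau>1 \<le> \<sigma>" unfolding \<sigma>_def by (rule cSup_upper[OF X1 bX])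
  have \<sigma>2: "\<sigma> \<le> t" unfolding \<sigma>_def by (rule cSup_least[OF ne]) (simp add: X_def)
  note \<sigma> = \<sigma>1 \<sigma>2
  have above: "(s,\<tau>) \<in> Dl up vp v0" if "\<sigma> < \<tau>" "\<tau> \<le> t" for \<tau>
  proof (rule ccontr)
    assume "(s,\<tau>) \<notin> Dl up vp v0"
    hence "\<tau> \<in> X" using that \<sigma> by (simp add: X_def)
    hence "\<tau> \<le> \<sigma>" unfolding \<sigma>_def using bX by (rule cSup_upper)
    thus False using that by simp
  qed
  show False
  proof (cases "(s,\<sigma>) \<in> Dl up vp v0")
    case True
    hence sD: "v0 < \<sigma>" "\<sigma> \<le> vp" "aw up \<sigma> < s" by (auto simp: Dl_def)
    obtain e where e: "e > 0" "\<forall>\<tau>. v0 < \<tau> \<and> \<tau> \<le> vp \<and> \<bar>\<tau> - \<sigma>\<bar> < e \<longrightarrow> aw up \<tau> < s"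
      using usc[OF sD(1,2,3) stD(4)] by blast
    have lt: "\<sigma> - min e (\<sigma> - v0) < Sup X" using e(1) sD(1) unfolding \<sigma>_def[symmetric] by simp
    obtain x where x: "x \<in> X" "\<sigma> - min e (\<sigma> - v0) < x" using less_cSupE[OF lt ne] by blast
    have xs: "x \<le> \<sigma>" using cSup_upper[OF x(1) bX] by (simp add: \<sigma>_def)
    have xne: "x \<noteq> \<sigma>" using x(1) True by (auto simp: X_def)
    have m: "min e (\<sigma> - v0) \<le> e" "min e (\<sigma> - v0) \<le> \<sigma> - v0" by auto
    have xv: "v0 < x" "x \<le> vp" "\<bar>x - \<sigma>\<bar> < e" using x(2) xs xne sD m by auto
    have "aw up x < s" using e(2) xv by blast
    hence "(s,x) \<in> Dl up vp v0" using xv stD(4) by (simp add: Dl_def)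
    thus False using x(1) by (simp add: X_def)
  next
    case False
    have "\<sigma> \<noteq> t" using False st by auto
    hence slt: "\<sigma> < t" using \<sigma>(2) by simp
    have "(s,\<sigma>) \<in> closure (Dl up vp v0)"
      unfolding closure_approachable
    proof (intro allI impI)
      fix e :: real assume e: "e > 0"
      define mm where "mm = min e (t - \<sigma>)"
      define \<tau> where "\<tau> = \<sigma> + mm / 2"
      have m: "0 < mm" "mm \<le> t - \<sigma>" "mm \<le> e" using e slt by (auto simp: mm_def)
      have "\<sigma> < \<tau>" unfolding \<tau>_def using m by linarith
      moreover have "\<tau> \<le> t" unfolding \<tau>_def using m by linarith
      ultimately have "(s,\<tau>) \<in> Dl up vp v0" by (rule above)
      moreover have "dist (s,\<tau>) (s,\<sigma>) = \<bar>\<tau> - \<sigma>\<bar>" by (simp add: dist_Pair_Pair dist_real_def)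
      moreover have "\<bar>\<tau> - \<sigma>\<bar> < e" using m by (simp add: \<tau>_def)
      ultimately show "\<exists>y\<in>Dl up vp v0. dist y (s,\<sigma>) < e" by (intro bexI[of _ "(s,\<tau>)"]) auto
    qed
    from cl[OF this] have c: "v0 \<le> \<sigma>" "\<sigma> \<le> vp" "al up v0 \<sigma> \<le> s" "s \<le> up" by auto
    have sT: "(s,\<sigma>) \<in> T" using b(3) t1 \<sigma> by auto
    show False
    proof (cases "\<sigma> = v0")
      case True
      hence "s = up" using c by (simp add: al_def)
      hence "(s,\<sigma>) \<in> I" using True V0(1) by simp
      thus False using sT IT by blast
    next
      case nv: False
      hence v: "v0 < \<sigma>" using c by simp
      have "aw up \<sigma> \<le> s" using c nv by (simp add: al_def)
      moreover have "aw up \<sigma> \<noteq> s"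
      proof
        assume "aw up \<sigma> = s"
        hence "(s,\<sigma>) \<in> I" using aw_spec[OF v c(2)] by simp
        thus False using sT IT by blast
      qed
      ultimately have "(s,\<sigma>) \<in> Dl up vp v0" using v c by (auto simp: Dl_def)
      thus False using False by simp
    qed
  qed
qed

lemma Dl_bdd: "\<exists>K. \<forall>q\<in>Dl up vp v0. \<bar>Af (fst q) (snd q)\<bar> \<le> K \<and> \<bar>Bf (fst q) (snd q)\<bar> \<le> K"
proof -
  have "Dl up vp v0 \<subseteq> cbox (U, v0) (up, vp)"
    using aw_spec by (fastforce simp: Dl_def cbox_Pair_iff)
  hence bd: "bounded (closure (Dl up vp v0))" by (meson bounded_cbox bounded_closure bounded_subset)
  hence cpt: "compact (closure (Dl up vp v0))" by (simp add: compact_eq_bounded_closed)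
  have cE: "continuous_on Eset (case_prod f)" if "reg D f" for f
  proof -
    have "Eset \<subseteq> D" by (auto simp: Eset_def)
    thus ?thesis using that continuous_on_subset[of D "case_prod f" Eset] by (simp add: reg_def)
  qed
  have eqA: "(\<lambda>q. Af (fst q) (snd q)) = (\<lambda>q. case_prod r q * case_prod (pv phi) q / case_prod (pv r) q)"
    by (auto simp: Af_def fun_eq_iff)
  have eqB: "(\<lambda>q. Bf (fst q) (snd q)) = (\<lambda>q. case_prod r q * case_prod (pu phi) q / case_prod (pu r) q)"
    by (auto simp: Bf_def fun_eq_iff)
  have cA: "continuous_on Eset (\<lambda>q. Af (fst q) (snd q))" unfolding eqA
    by (intro continuous_on_divide continuous_on_mult cE regs) (auto simp: Eset_def)
  have cB: "continuous_on Eset (\<lambda>q. Bf (fst q) (snd q))" unfolding eqB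
    by (intro continuous_on_divide continuous_on_mult cE regs) (auto simp: Eset_def)
  obtain KA where KA: "\<forall>x\<in>(\<lambda>q. Af (fst q) (snd q)) ` closure (Dl up vp v0). norm x \<le> KA"
    using compact_imp_bounded[OF compact_continuous_image[OF continuous_on_subset[OF cA clE] cpt]]
    unfolding bounded_iff by blast
  obtain KB where KB: "\<forall>x\<in>(\<lambda>q. Bf (fst q) (snd q)) ` closure (Dl up vp v0). norm x \<le> KB"
    using compact_imp_bounded[OF compact_continuous_image[OF continuous_on_subset[OF cB clE] cpt]]
    unfolding bounded_iff by blast
  show ?thesis using KA KB closure_subset by (intro exI[of _ "max KA KB"]) fastforce
qed

end

lemma scalar:
  assumes p: "(up,vp) \<in> T"
  shows "\<bar>Af up vp\<bar> \<le> m0 \<and> \<bar>Bf up vp\<bar> \<le> m0"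
proof -
  obtain v0 where v0: "V \<le> v0" "v0 < vp" "(up,v0)\<in>I" "\<forall>t. v0<t \<and> t\<le>vp \<longrightarrow> (up,t)\<in>T"
    using vseg[OF p] by blast
  note ctx = p v0(3) v0(2) v0(4)
  define Dp where "Dp = Dl up vp v0"
  define G where "G = (\<lambda>q. max \<bar>Af (fst q) (snd q)\<bar> \<bar>Bf (fst q) (snd q)\<bar>)"
  have pD: "(up,vp) \<in> Dp" using aw_spec[OF ctx, of vp] v0(2) by (simp add: Dp_def Dl_def)
  obtain K where K: "\<forall>q\<in>Dp. \<bar>Af (fst q) (snd q)\<bar> \<le> K \<and> \<bar>Bf (fst q) (snd q)\<bar> \<le> K"
    using Dl_bdd[OF ctx] unfolding Dp_def by blast
  have bdd: "bdd_above (G ` Dp)" using K by (auto simp: bdd_above_def G_def intro!: exI[of _ K])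
  have ne: "Dp \<noteq> {}" using pD by auto
  define S where "S = Sup (G ` Dp)"
  have GS: "G q \<le> S" if "q \<in> Dp" for q unfolding S_def using bdd that by (rule cSUP_upper[rotated])
  show ?thesis
  proof (cases "S \<le> m0")
    case True
    thus ?thesis using GS[OF pD] by (simp add: G_def)
  next
    case False
    hence Sm: "S > m0" by simp
    define c where "c = r up vp / r0"
    have c: "c > 0" using eqs(1)[OF TD[OF p]] r0 by (simp add: c_def)
    have bnd: "G q \<le> S - (S - m0) * c" if q: "q \<in> Dp" for q
    proof -
      obtain s t where st: "q = (s,t)" by force
      have qD: "(s,t) \<in> Dl up vp v0" using q st by (simp add: Dp_def)
      have qT: "(s,t) \<in> T" using Dl_T[OF ctx qD] .
      have rr: "(S - m0) * c \<le> (S - m0) * r s t / r0"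
        using Dl_r[OF ctx qD] Sm r0 by (simp add: c_def divide_right_mono mult_left_mono)
      obtain a' where a': "U \<le> a'" "a' < s" "(a',t)\<in>I" "\<forall>x. a'<x \<and> x\<le>s \<longrightarrow> (x,t)\<in>T"
        using useg[OF qT] by blast
      have Bb: "\<forall>x. a'<x \<and> x\<le>s \<longrightarrow> \<bar>Bf x t\<bar> \<le> S"
      proof (intro allI impI)
        fix x assume x: "a'<x \<and> x\<le>s"
        hence "(x,t) \<in> Dp" using Dl_useg[OF ctx qD a'(3) a'(4)] by (simp add: Dp_def)
        thus "\<bar>Bf x t\<bar> \<le> S" using GS[of "(x,t)"] by (simp add: G_def)
      qed
      have A: "\<bar>Af s t\<bar> \<le> S - (S - m0) * r s t / r0"
        using ACmp[OF a'(3) a'(4) _ _ Bb] a'(2) Sm by simp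
      obtain b where b: "V \<le> b" "b < t" "(s,b)\<in>I" "\<forall>\<tau>. b<\<tau> \<and> \<tau>\<le>t \<longrightarrow> (s,\<tau>)\<in>T"
        using vseg[OF qT] by blast
      have Ab: "\<forall>\<tau>. b<\<tau> \<and> \<tau>\<le>t \<longrightarrow> \<bar>Af s \<tau>\<bar> \<le> S"
      proof (intro allI impI)
        fix \<tau> assume \<tau>: "b<\<tau> \<and> \<tau>\<le>t"
        hence "(s,\<tau>) \<in> Dp" using Dl_vseg[OF ctx qD b(3) b(2) b(4)] by (simp add: Dp_def)
        thus "\<bar>Af s \<tau>\<bar> \<le> S" using GS[of "(s,\<tau>)"] by (simp add: G_def)
      qed
      have B: "\<bar>Bf s t\<bar> \<le> S - (S - m0) * r s t / r0"
        using BCmp[OF b(3) b(4) _ _ Ab] b(2) Sm by simp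
      show ?thesis using A B rr st by (simp add: G_def)
    qed
    have "S \<le> S - (S - m0) * c" unfolding S_def
      by (rule cSUP_least[OF ne]) (use bnd in \<open>simp add: S_def\<close>)
    moreover have "(S - m0) * c > 0" using Sm c by simp
    ultimately show ?thesis by simp
  qed
qed

lemma final:
  assumes uv: "(u,v) \<in> T"
  defines "W \<equiv> (1+eps)*M + k*r0/4"
  shows "\<bar>r u v * pv r u v + M\<bar> \<le> eps*M + k*r0/4"
    "\<bar>r u v * pu r u v + M\<bar> \<le> eps*M + k*r0/4"
    "(Om u v)\<^sup>2 \<le> k * W / r u v"
    "(r u v)\<^sup>2 * \<bar>pu phi u v\<bar> + (r u v)\<^sup>2 * \<bar>pv phi u v\<bar> \<le> 2 * m0 * W"
proof -
  have L: "-(1+eps)*M - k*r0/4 \<le> r u v * pv r u v" "r u v * pv r u v \<le> -(1-eps)*M" using LamU[OF uv] by auto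
  have N: "-(1+eps)*M - k*r0/4 \<le> r u v * pu r u v" "r u v * pu r u v \<le> -(1-eps)*M" using NuV[OF uv] by auto
  have kr: "k*r0/4 \<ge> 0" using k r0 by simp
  have em: "eps * M \<ge> 0" using eps Mpos by simp
  show "\<bar>r u v * pv r u v + M\<bar> \<le> eps*M + k*r0/4" using L kr em by (simp add: abs_le_iff algebra_simps)
  show "\<bar>r u v * pu r u v + M\<bar> \<le> eps*M + k*r0/4" using N kr em by (simp add: abs_le_iff algebra_simps)
  have rp: "r u v > 0" using eqs(1)[OF TD[OF uv]] .
  have aL: "\<bar>r u v * pv r u v\<bar> \<le> W" using L eps Mpos kr em unfolding W_def by (simp add: abs_le_iff algebra_simps)
  have aN: "\<bar>r u v * pu r u v\<bar> \<le> W" using N eps Mpos kr em unfolding W_def by (simp add: abs_le_iff algebra_simps)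
  obtain u0 where a: "U \<le> u0" "u0<u" "(u0,v)\<in>I" "\<forall>s. u0<s \<and> s\<le>u \<longrightarrow> (s,v)\<in>T"
    using useg[OF uv] by blast
  have O: "(Om u v)\<^sup>2 \<le> k * (- pu r u v)" using OmU[OF a(3) a(4)] a(2) by simp
  have "- pu r u v = \<bar>r u v * pu r u v\<bar> / r u v" using rp signs[OF uv] by (simp add: abs_mult)
  also have "\<dots> \<le> W / r u v" using aN rp by (simp add: divide_right_mono)
  finally have "k * (- pu r u v) \<le> k * (W / r u v)" using k by (intro mult_left_mono) auto
  thus "(Om u v)\<^sup>2 \<le> k * W / r u v" using O by simp
  have sc: "\<bar>Af u v\<bar> \<le> m0" "\<bar>Bf u v\<bar> \<le> m0" using scalar[OF uv] by auto
  have m0: "m0 \<ge> 0" using eps Mpos by (simp add: m0_def)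
  have "(r u v)\<^sup>2 * \<bar>pv phi u v\<bar> = \<bar>Af u v\<bar> * \<bar>r u v * pv r u v\<bar>"
    using signs[OF uv] by (simp add: Af_def abs_mult power2_eq_square)
  also have "\<dots> \<le> m0 * W" using sc aL m0 by (intro mult_mono) auto
  finally have 1: "(r u v)\<^sup>2 * \<bar>pv phi u v\<bar> \<le> m0 * W" .
  have "(r u v)\<^sup>2 * \<bar>pu phi u v\<bar> = \<bar>Bf u v\<bar> * \<bar>r u v * pu r u v\<bar>"
    using signs[OF uv] by (simp add: Bf_def abs_mult power2_eq_square)
  also have "\<dots> \<le> m0 * W" using sc aN m0 by (intro mult_mono) auto
  finally have 2: "(r u v)\<^sup>2 * \<bar>pu phi u v\<bar> \<le> m0 * W" .
  show "(r u v)\<^sup>2 * \<bar>pu phi u v\<bar> + (r u v)\<^sup>2 * \<bar>pv phi u v\<bar> \<le> 2 * m0 * W" using 1 2 by simp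
qed

end

theorem mainTheorem13:
  fixes M :: real
  assumes "M > 0"
  shows "\<exists>C::real. \<forall>\<delta>>0. \<exists>\<epsilon>0>0. \<exists>l0::nat. \<forall>\<epsilon>. 0 < \<epsilon> \<and> \<epsilon> \<le> \<epsilon>0 \<longrightarrow>
           (\<forall>D r Om phi U V.
              ESF_solution D r Om phi \<and> trapezoid_setup D r U V l0 \<and>
              initial_bounds M \<epsilon> D r Om phi U V l0 \<longrightarrow>
              (\<forall>(u,v)\<in>trapezoid D r U V l0.
                 \<bar>r u v * pv r u v + M\<bar> \<le> \<delta> * M \<and>
                 \<bar>r u v * pu r u v + M\<bar> \<le> \<delta> * M \<and>
                 (Om u v)\<^sup>2 \<le> 2.5 * M / r u v \<and>
                 (r u v)\<^sup>2 * \<bar>pu phi u v\<bar> + (r u v)\<^sup>2 * \<bar>pv phi u v\<bar> \<le> C * \<epsilon>))"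
proof (rule exI[of _ "8::real"], intro allI impI)
  have Mpos: "M > 0" by fact
  fix \<delta> :: real assume \<delta>: "\<delta> > 0"
  define \<epsilon>0 where "\<epsilon>0 = min (\<delta>/2) (1/100)"
  define \<rho> where "\<rho> = min \<delta> 1 * M / 5"
  have \<rho>: "\<rho> > 0" using \<delta> Mpos by (simp add: \<rho>_def)
  obtain l0 :: nat where l0: "(1/2::real)^l0 < \<rho>" using real_arch_pow_inv[OF \<rho>, of "1/2"] by auto
  have r0eq: "2 powr (- real l0) = (1/2::real)^l0"
    by (simp add: powr_minus powr_realpow power_one_over inverse_eq_divide)
  have \<rho>1: "\<rho> \<le> \<delta> * M / 5" "\<rho> \<le> M / 5" using Mpos \<delta>
    by (auto simp: \<rho>_def divide_right_mono mult_right_mono)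
  show "\<exists>\<epsilon>0>0. \<exists>l0::nat. \<forall>\<epsilon>. 0 < \<epsilon> \<and> \<epsilon> \<le> \<epsilon>0 \<longrightarrow>
           (\<forall>D r Om phi U V.
              ESF_solution D r Om phi \<and> trapezoid_setup D r U V l0 \<and>
              initial_bounds M \<epsilon> D r Om phi U V l0 \<longrightarrow>
              (\<forall>(u,v)\<in>trapezoid D r U V l0.
                 \<bar>r u v * pv r u v + M\<bar> \<le> \<delta> * M \<and>
                 \<bar>r u v * pu r u v + M\<bar> \<le> \<delta> * M \<and>
                 (Om u v)\<^sup>2 \<le> 2.5 * M / r u v \<and>
                 (r u v)\<^sup>2 * \<bar>pu phi u v\<bar> + (r u v)\<^sup>2 * \<bar>pv phi u v\<bar> \<le> 8 * \<epsilon>))"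
  proof -
  have e0: "\<epsilon>0 > 0" using \<delta> by (simp add: \<epsilon>0_def)
  have "\<forall>\<epsilon>. 0 < \<epsilon> \<and> \<epsilon> \<le> \<epsilon>0 \<longrightarrow>
           (\<forall>D r Om phi U V.
              ESF_solution D r Om phi \<and> trapezoid_setup D r U V l0 \<and>
              initial_bounds M \<epsilon> D r Om phi U V l0 \<longrightarrow>
              (\<forall>(u,v)\<in>trapezoid D r U V l0.
                 \<bar>r u v * pv r u v + M\<bar> \<le> \<delta> * M \<and>
                 \<bar>r u v * pu r u v + M\<bar> \<le> \<delta> * M \<and>
                 (Om u v)\<^sup>2 \<le> 2.5 * M / r u v \<and>
                 (r u v)\<^sup>2 * \<bar>pu phi u v\<bar> + (r u v)\<^sup>2 * \<bar>pv phi u v\<bar> \<le> 8 * \<epsilon>))"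
  proof (rule allI, rule impI)
    fix \<epsilon> :: real
    assume \<epsilon>: "0 < \<epsilon> \<and> \<epsilon> \<le> \<epsilon>0"
    show "\<forall>D r Om phi U V.
              ESF_solution D r Om phi \<and> trapezoid_setup D r U V l0 \<and>
              initial_bounds M \<epsilon> D r Om phi U V l0 \<longrightarrow>
              (\<forall>(u,v)\<in>trapezoid D r U V l0.
                 \<bar>r u v * pv r u v + M\<bar> \<le> \<delta> * M \<and>
                 \<bar>r u v * pu r u v + M\<bar> \<le> \<delta> * M \<and>
                 (Om u v)\<^sup>2 \<le> 2.5 * M / r u v \<and>
                 (r u v)\<^sup>2 * \<bar>pu phi u v\<bar> + (r u v)\<^sup>2 * \<bar>pv phi u v\<bar> \<le> 8 * \<epsilon>)"
    proof (intro allI impI)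
    fix D r Om phi U V
    assume H: "ESF_solution D r Om phi \<and> trapezoid_setup D r U V l0 \<and> initial_bounds M \<epsilon> D r Om phi U V l0"
    define r0 where "r0 = 2 powr (- real l0)"
    have r0: "r0 > 0" "r0 < \<rho>" using l0 by (auto simp: r0_def r0eq)
    have e1: "\<epsilon> \<le> \<delta>/2" "\<epsilon> \<le> 1/100" using \<epsilon> by (auto simp: \<epsilon>0_def)
    have TS: "trapezoid_setup D r U V l0" using H by blast
    have IB: "initial_bounds M \<epsilon> D r Om phi U V l0" using H by blast
    have Tdef: "trapezoid D r U V l0 = {(u,v). (u,v)\<in>D \<and> U<u \<and> V<v \<and> r u v < r0}"
      by (auto simp: trapezoid_def r0_def)
    have Idef: "init_curve D r U V l0 = {(u,v). (u,v)\<in>D \<and> U\<le>u \<and> V\<le>v \<and> r u v = r0}"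
      by (auto simp: init_curve_def r0_def)
    interpret E: esf D r Om phi U V r0 M \<epsilon> "trapezoid D r U V l0" "init_curve D r U V l0"
    proof
      show "Sol D r Om phi" using H ESF_Sol by blast
      show "0 < r0" by (rule r0(1))
      show "0 < M" by fact
      show "0 < \<epsilon>" using \<epsilon> by simp
      show "\<epsilon> \<le> 1/100" by (rule e1(2))
      show "trapezoid D r U V l0 = {(u,v). (u,v)\<in>D \<and> U<u \<and> V<v \<and> r u v < r0}" by (rule Tdef)
      show "init_curve D r U V l0 = {(u,v). (u,v)\<in>D \<and> U\<le>u \<and> V\<le>v \<and> r u v = r0}" by (rule Idef)
      fix u v
      show "(u,v)\<in>trapezoid D r U V l0 \<Longrightarrow> pu r u v < 0 \<and> pv r u v < 0"
        using TS unfolding trapezoid_setup_def by blast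
      show "(u,v)\<in>trapezoid D r U V l0 \<Longrightarrow> \<exists>u0. U \<le> u0 \<and> u0 < u \<and> (u0,v)\<in>init_curve D r U V l0 \<and>
          (\<forall>s. u0<s \<and> s\<le>u \<longrightarrow> (s,v)\<in>trapezoid D r U V l0)"
        using TS unfolding trapezoid_setup_def by blast
      show "(u,v)\<in>trapezoid D r U V l0 \<Longrightarrow> \<exists>v0. V \<le> v0 \<and> v0 < v \<and> (u,v0)\<in>init_curve D r U V l0 \<and>
          (\<forall>t. v0<t \<and> t\<le>v \<longrightarrow> (u,t)\<in>trapezoid D r U V l0)"
        using TS unfolding trapezoid_setup_def by blast
      assume uvI: "(u,v)\<in>init_curve D r U V l0"
      hence ru: "r u v = r0" by (simp add: Idef)
      show "\<bar>pv r u v + M/r0\<bar> \<le> \<epsilon>*M/r0 \<and> \<bar>pu r u v + M/r0\<bar> \<le> \<epsilon>*M/r0 \<and>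
        \<bar>(Om u v)\<^sup>2 - 2*M/r0\<bar> \<le> \<epsilon>*M/r0 \<and> \<bar>pu phi u v\<bar> \<le> \<epsilon>/r0\<^sup>2 \<and> \<bar>pv phi u v\<bar> \<le> \<epsilon>/r0\<^sup>2"
        using IB uvI unfolding initial_bounds_def ru[symmetric] by blast
    qed
    show "\<forall>(u,v)\<in>trapezoid D r U V l0.
                 \<bar>r u v * pv r u v + M\<bar> \<le> \<delta> * M \<and>
                 \<bar>r u v * pu r u v + M\<bar> \<le> \<delta> * M \<and>
                 (Om u v)\<^sup>2 \<le> 2.5 * M / r u v \<and>
                 (r u v)\<^sup>2 * \<bar>pu phi u v\<bar> + (r u v)\<^sup>2 * \<bar>pv phi u v\<bar> \<le> 8 * \<epsilon>"
    proof (rule ballI)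
      fix q assume q: "q \<in> trapezoid D r U V l0"
      obtain u v where quv: "q = (u,v)" by force
      have uv: "(u,v) \<in> trapezoid D r U V l0" using q quv by simp
      define W where "W = (1+\<epsilon>)*M + E.k*r0/4"
      note F = E.final[OF uv]
      have k: "0 < E.k" "E.k \<le> 21/10" using E.k by auto
      have kr: "E.k * r0 \<le> 21/10 * r0" using k r0 by (intro mult_right_mono) auto
      have em1: "\<epsilon> * M \<le> \<delta>/2 * M" "\<epsilon> * M \<le> 1/100 * M" using e1 Mpos by (auto intro: mult_right_mono)
      have rr: "r0 \<le> \<delta> * M / 5" "r0 \<le> M / 5" using r0 \<rho>1 by auto
      have dm: "\<delta>/2 * M = (\<delta> * M)/2" by simp
      have dm0: "\<delta> * M > 0" using \<delta> Mpos by simp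
      have "\<bar>r u v * pv r u v + M\<bar> \<le> \<epsilon>*M + E.k*r0/4" using F(1) .
      moreover have "\<epsilon>*M + E.k*r0/4 \<le> \<delta> * M" using em1 kr rr dm dm0 by linarith
      ultimately have A1: "\<bar>r u v * pv r u v + M\<bar> \<le> \<delta> * M" by linarith
      have "\<bar>r u v * pu r u v + M\<bar> \<le> \<epsilon>*M + E.k*r0/4" using F(2) .
      moreover have "\<epsilon>*M + E.k*r0/4 \<le> \<delta> * M" using em1 kr rr dm dm0 by linarith
      ultimately have A2: "\<bar>r u v * pu r u v + M\<bar> \<le> \<delta> * M" by linarith
      have W0: "W \<ge> 0" using k r0 \<epsilon> Mpos by (simp add: W_def)
      have Wb: "W \<le> 1115/1000 * M" using em1 kr rr unfolding W_def by (simp add: algebra_simps)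
      have kW: "E.k * W \<le> 21/10 * W" using k W0 by (intro mult_right_mono) auto
      have rp: "r u v > 0" using E.eqs(1)[OF E.TD[OF uv]] .
      have "(Om u v)\<^sup>2 \<le> E.k * W / r u v" using F(3) unfolding W_def .
      also have "\<dots> \<le> 2.5 * M / r u v"
      proof -
        have "E.k * W \<le> 2.5 * M" using kW Wb Mpos by linarith
        thus ?thesis using rp by (intro divide_right_mono) auto
      qed
      finally have A3: "(Om u v)\<^sup>2 \<le> 2.5 * M / r u v" .
      have "(r u v)\<^sup>2 * \<bar>pu phi u v\<bar> + (r u v)\<^sup>2 * \<bar>pv phi u v\<bar> \<le> 2 * E.m0 * W" using F(4) unfolding W_def .
      also have "\<dots> = 4 * \<epsilon> * (W / M)" using Mpos by (simp add: E.m0_def)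
      also have "\<dots> \<le> 4 * \<epsilon> * 2" using Wb Mpos \<epsilon> by (intro mult_left_mono) (auto simp: divide_le_eq)
      finally have A4: "(r u v)\<^sup>2 * \<bar>pu phi u v\<bar> + (r u v)\<^sup>2 * \<bar>pv phi u v\<bar> \<le> 8 * \<epsilon>" by simp
      show "case q of (u,v) \<Rightarrow> \<bar>r u v * pv r u v + M\<bar> \<le> \<delta> * M \<and>
                 \<bar>r u v * pu r u v + M\<bar> \<le> \<delta> * M \<and>
                 (Om u v)\<^sup>2 \<le> 2.5 * M / r u v \<and>
                 (r u v)\<^sup>2 * \<bar>pu phi u v\<bar> + (r u v)\<^sup>2 * \<bar>pv phi u v\<bar> \<le> 8 * \<epsilon>"
        using A1 A2 A3 A4 quv by simp
    qed
    qed
  qed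
  thus ?thesis using e0 by blast
  qed
qed

end
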